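(* For any integer $m>3$: (1) $|V(J'(m,2))|=\binom{m}{2}+m$; (2) $\operatorname{cc}(J'(m,2))=m$; (3) $Z_+(J'(m,2))=\binom{m}{2}$; (4) $Z_+(J'(m,2))=|V(J'(m,2))|-\operatorname{cc}(J'(m,2))$.
   Context: $J'(m,2)$ is the graph whose vertices are all the sets $\{i,j\}$ ($i\ne j$) and $\{i\}$ with $i,j\in\{1,\dots,m\}$, two vertices being adjacent iff the sets have non-empty intersection. $\operatorname{cc}(G)$ is the minimum number of cliques needed to cover all edges of $G$. $Z_+(G)$ is the positive zero forcing number: the minimum size of a set $B$ of initially black vertices such that repeated application of the rule "let $W_1,\dots,W_k$ be the vertex sets of components of $G$ minus the black vertices; a black vertex $u$ whose only white neighbour in the subgraph induced by $W_i\cup(\text{black vertices})$ is $w$ may turn $w$ black" eventually makes all vertices black. *)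

theory Defs
  imports Main
begin

text \<open>Finite simple graphs are represented by a vertex set V and an adjacency
  predicate adj; only adj restricted to V matters. All notions below are
  stated relative to (V, adj) and use adjacency between distinct vertices only.\<close>

definition edges :: "'a set \<Rightarrow> ('a \<Rightarrow> 'a \<Rightarrow> bool) \<Rightarrow> 'a set set" where
  "edges V adj = {{u, v} | u v. u \<in> V \<and> v \<in> V \<and> u \<noteq> v \<and> adj u v}"

definition is_clique :: "'a set \<Rightarrow> ('a \<Rightarrow> 'a \<Rightarrow> bool) \<Rightarrow> 'a set \<Rightarrow> bool" where
  "is_clique V adj K \<longleftrightarrow> K \<subseteq> V \<and> (\<forall>u\<in>K. \<forall>v\<in>K. u \<noteq> v \<longrightarrow> adj u v)"

definition clique_cover_number :: "'a set \<Rightarrow> ('a \<Rightarrow> 'a \<Rightarrow> bool) \<Rightarrow> nat" where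
  "clique_cover_number V adj =
     (LEAST k. \<exists>C. finite C \<and> card C = k \<and> (\<forall>K\<in>C. is_clique V adj K) \<and>
                  (\<forall>e\<in>edges V adj. \<exists>K\<in>C. e \<subseteq> K))"

definition white_component :: "'a set \<Rightarrow> ('a \<Rightarrow> 'a \<Rightarrow> bool) \<Rightarrow> 'a set \<Rightarrow> 'a \<Rightarrow> 'a set" where
  "white_component V adj B w =
     {x. (\<lambda>a b. a \<in> V - B \<and> b \<in> V - B \<and> a \<noteq> b \<and> adj a b)\<^sup>*\<^sup>* w x \<and> x \<in> V - B}"

text \<open>Positive semidefinite (positive zero forcing) colour change rule:
  black u forces white w if, in the subgraph induced by W \<union> B where W is the
  component of G - B containing w, w is the only white neighbour of u.\<close>
definition psd_force :: "'a set \<Rightarrow> ('a \<Rightarrow> 'a \<Rightarrow> bool) \<Rightarrow> 'a set \<Rightarrow> 'a \<Rightarrow> 'a \<Rightarrow> bool" where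
  "psd_force V adj B u w \<longleftrightarrow> u \<in> B \<and> w \<in> V - B \<and>
     {x \<in> white_component V adj B w. x \<noteq> u \<and> adj u x} = {w}"

inductive psd_reach :: "'a set \<Rightarrow> ('a \<Rightarrow> 'a \<Rightarrow> bool) \<Rightarrow> 'a set \<Rightarrow> 'a set \<Rightarrow> bool"
  for V adj where
  refl: "psd_reach V adj B B"
| step: "psd_reach V adj B0 B \<Longrightarrow> psd_force V adj B u w \<Longrightarrow> psd_reach V adj B0 (insert w B)"

definition psd_forcing_set :: "'a set \<Rightarrow> ('a \<Rightarrow> 'a \<Rightarrow> bool) \<Rightarrow> 'a set \<Rightarrow> bool" where
  "psd_forcing_set V adj B \<longleftrightarrow> B \<subseteq> V \<and> psd_reach V adj B V"

definition Zplus :: "'a set \<Rightarrow> ('a \<Rightarrow> 'a \<Rightarrow> bool) \<Rightarrow> nat" where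
  "Zplus V adj = (LEAST k. \<exists>B. psd_forcing_set V adj B \<and> card B = k)"

definition Jp_vertices :: "nat \<Rightarrow> nat set set" where
  "Jp_vertices m = {S. S \<subseteq> {1..m} \<and> (card S = 1 \<or> card S = 2)}"

definition Jp_adj :: "nat set \<Rightarrow> nat set \<Rightarrow> bool" where
  "Jp_adj S T \<longleftrightarrow> S \<noteq> T \<and> S \<inter> T \<noteq> {}"

end

theory Submission
  imports Defs
begin

definition NB :: "nat \<Rightarrow> nat set set \<Rightarrow> nat set" where
  "NB m B = {i \<in> {1..m}. \<exists>S \<in> Jp_vertices m. i \<in> S \<and> S \<notin> B}"

lemma fin_V: "finite (Jp_vertices m)"
proof -
  have "Jp_vertices m \<subseteq> Pow {1..m}" unfolding Jp_vertices_def by auto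
  then show ?thesis by (rule finite_subset) simp
qed

lemma card_V: "card (Jp_vertices m) = (m choose 2) + m"
proof -
  have e: "Jp_vertices m = {S. S \<subseteq> {1..m} \<and> card S = 2} \<union> {S. S \<subseteq> {1..m} \<and> card S = 1}"
    unfolding Jp_vertices_def by auto
  have "card ({S. S \<subseteq> {1..m} \<and> card S = 2} \<union> {S. S \<subseteq> {1..m} \<and> card S = 1})
     = card {S. S \<subseteq> {1..m} \<and> card S = 2} + card {S. S \<subseteq> {1..m} \<and> card S = 1}"
    by (rule card_Un_disjoint) auto
  also have "\<dots> = (m choose 2) + (m choose 1)" by (simp add: n_subsets)
  finally show ?thesis using e by simp
qed

lemma reach_bound:
  assumes "psd_reach V Jp_adj B0 B" "V = Jp_vertices m" "B0 \<subseteq> V"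
  shows "B \<subseteq> V \<and> card B + card (NB m B) \<le> card B0 + card (NB m B0)"
  using assms
proof (induction rule: psd_reach.induct)
  case (refl B)
  then show ?case by simp
next
  case (step B0 B u w)
  then have BV: "B \<subseteq> V" and IH: "card B + card (NB m B) \<le> card B0 + card (NB m B0)" by auto
  have uB: "u \<in> B" and wV: "w \<in> V" and wB: "w \<notin> B"
    and S: "{x \<in> white_component V Jp_adj B w. x \<noteq> u \<and> Jp_adj u x} = {w}"
    using step.hyps(2) unfolding psd_force_def by auto
  have "Jp_adj u w" using S by auto
  then obtain i where iu: "i \<in> u" and iw: "i \<in> w" unfolding Jp_adj_def by auto
  have wsub: "w \<subseteq> {1..m}" using wV step.prems unfolding Jp_vertices_def by auto
  have iN: "i \<in> NB m B" unfolding NB_def using iw wsub wV wB step.prems by auto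
  have sub: "NB m (insert w B) \<subseteq> NB m B - {i}"
  proof
    fix j assume j: "j \<in> NB m (insert w B)"
    then obtain T where T: "T \<in> Jp_vertices m" "j \<in> T" "T \<notin> insert w B" and jm: "j \<in> {1..m}"
      unfolding NB_def by auto
    have "j \<in> NB m B" using T jm unfolding NB_def by auto
    moreover have "j \<noteq> i"
    proof
      assume ji: "j = i"
      have TV: "T \<in> V" using T step.prems by simp
      have "(\<lambda>a b. a \<in> V - B \<and> b \<in> V - B \<and> a \<noteq> b \<and> Jp_adj a b)\<^sup>*\<^sup>* w T"
        apply (rule r_into_rtranclp)
        using TV T wV wB iw ji unfolding Jp_adj_def by auto
      then have "T \<in> white_component V Jp_adj B w"
        unfolding white_component_def using TV T by auto
      moreover have "T \<noteq> u" using uB T by auto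
      moreover have "Jp_adj u T" using iu T ji \<open>T \<noteq> u\<close> unfolding Jp_adj_def by auto
      ultimately have "T \<in> {w}" using S by blast
      then show False using T by auto
    qed
    ultimately show "j \<in> NB m B - {i}" by auto
  qed
  have finN: "finite (NB m B)" unfolding NB_def by auto
  have "card (NB m (insert w B)) \<le> card (NB m B - {i})"
    by (rule card_mono) (use finN sub in auto)
  also have "\<dots> = card (NB m B) - 1" using iN finN by simp
  finally have c1: "card (NB m (insert w B)) \<le> card (NB m B) - 1" .
  have finB: "finite B" using BV fin_V step.prems finite_subset by blast
  have c2: "card (insert w B) = card B + 1" using finB wB by simp
  have "card (NB m B) \<ge> 1" using iN finN by (metis card_0_eq empty_iff less_one not_le)
  then have "card (insert w B) + card (NB m (insert w B)) \<le> card B0 + card (NB m B0)"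
    using c1 c2 IH by linarith
  moreover have "insert w B \<subseteq> V" using BV wV by blast
  ultimately show ?case by blast
qed

lemma Zplus_lower:
  assumes "psd_forcing_set (Jp_vertices m) Jp_adj B0"
  shows "m choose 2 \<le> card B0"
proof -
  have r: "psd_reach (Jp_vertices m) Jp_adj B0 (Jp_vertices m)" and s: "B0 \<subseteq> Jp_vertices m"
    using assms unfolding psd_forcing_set_def by auto
  have "card (Jp_vertices m) + card (NB m (Jp_vertices m)) \<le> card B0 + card (NB m B0)"
    using reach_bound[OF r HOL.refl s] by simp
  moreover have "card (NB m B0) \<le> m"
  proof -
    have "NB m B0 \<subseteq> {1..m}" unfolding NB_def by auto
    then have "card (NB m B0) \<le> card {1..m}" by (rule card_mono[rotated]) simp
    then show ?thesis by simp
  qed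
  ultimately show ?thesis using card_V[of m] by linarith
qed

definition pairs :: "nat \<Rightarrow> nat set set" where
  "pairs m = {S. S \<subseteq> {1..m} \<and> card S = 2}"

lemma reach_singletons:
  assumes "m \<ge> 2" "finite A" "A \<subseteq> {1..m}"
  shows "psd_reach (Jp_vertices m) Jp_adj (pairs m) (pairs m \<union> (\<lambda>i. {i}) ` A)"
  using assms(2,3)
proof (induction A rule: finite_induct)
  case empty
  then show ?case by (simp add: psd_reach.refl)
next
  case (insert k A)
  define B where "B = pairs m \<union> (\<lambda>i. {i}) ` A"
  have k: "k \<in> {1..m}" using insert by auto
  obtain k' where k': "k' \<in> {1..m}" "k' \<noteq> k"
  proof (cases "k = 1")
    case True
    then show ?thesis using that[of 2] assms(1) by auto
  next
    case False
    then show ?thesis using that[of 1] assms(1) k by auto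
  qed
  define u where "u = {k, k'}"
  have uB: "u \<in> B" unfolding B_def pairs_def u_def using k k' by auto
  have kV: "{k} \<in> Jp_vertices m" unfolding Jp_vertices_def using k by auto
  have kB: "{k} \<notin> B" unfolding B_def pairs_def using insert.hyps(2) by auto
  have wc: "white_component (Jp_vertices m) Jp_adj B {k} = {{k}}"
  proof -
    let ?R = "\<lambda>a b. a \<in> Jp_vertices m - B \<and> b \<in> Jp_vertices m - B \<and> a \<noteq> b \<and> Jp_adj a b"
    have noR: "\<not> ?R {k} y" for y
    proof
      assume h: "?R {k} y"
      then have "k \<in> y" "y \<noteq> {k}" unfolding Jp_adj_def by auto
      moreover have "y \<subseteq> {1..m}" "card y = 1 \<or> card y = 2" using h unfolding Jp_vertices_def by auto
      moreover have "y \<notin> pairs m" using h unfolding B_def by auto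
      ultimately show False unfolding pairs_def by (auto simp: card_Suc_eq)
    qed
    have "?R\<^sup>*\<^sup>* {k} x \<Longrightarrow> x = {k}" for x
      by (erule converse_rtranclpE) (use noR in auto)
    then show ?thesis unfolding white_component_def using kV kB by auto
  qed
  have f: "psd_force (Jp_vertices m) Jp_adj B u {k}"
    unfolding psd_force_def wc using uB kV kB k' unfolding u_def Jp_adj_def by auto
  have "psd_reach (Jp_vertices m) Jp_adj (pairs m) (insert {k} B)"
    using psd_reach.step[OF insert.IH[folded B_def] f] insert.prems by auto
  then show ?case unfolding B_def by simp
qed

lemma Zplus_upper:
  assumes "m \<ge> 2"
  shows "psd_forcing_set (Jp_vertices m) Jp_adj (pairs m) \<and> card (pairs m) = m choose 2"
proof -
  have "pairs m \<union> (\<lambda>i. {i}) ` {1..m} = Jp_vertices m"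
    unfolding pairs_def Jp_vertices_def by (auto simp: card_Suc_eq)
  then have "psd_reach (Jp_vertices m) Jp_adj (pairs m) (Jp_vertices m)"
    using reach_singletons[OF assms, of "{1..m}"] by simp
  moreover have "pairs m \<subseteq> Jp_vertices m" unfolding pairs_def Jp_vertices_def by auto
  moreover have "card (pairs m) = m choose 2" unfolding pairs_def by (simp add: n_subsets)
  ultimately show ?thesis unfolding psd_forcing_set_def by auto
qed

lemma Zplus_val:
  assumes "m \<ge> 2"
  shows "Zplus (Jp_vertices m) Jp_adj = m choose 2"
  unfolding Zplus_def
  apply (rule Least_equality)
  using Zplus_upper[OF assms] apply blast
  using Zplus_lower by blast

definition star :: "nat \<Rightarrow> nat \<Rightarrow> nat set set" where
  "star m i = {S \<in> Jp_vertices m. i \<in> S}"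

lemma cc_val:
  assumes "m \<ge> 2"
  shows "clique_cover_number (Jp_vertices m) Jp_adj = m"
  unfolding clique_cover_number_def
proof (rule Least_equality)
  let ?C = "star m ` {1..m}"
  have inj: "inj_on (star m) {1..m}"
  proof (rule inj_onI)
    fix i j assume a: "i \<in> {1..m}" "j \<in> {1..m}" "star m i = star m j"
    have "{i} \<in> Jp_vertices m" unfolding Jp_vertices_def using a(1) by simp
    then have "{i} \<in> star m i" unfolding star_def by simp
    then have "{i} \<in> star m j" using a(3) by simp
    then show "i = j" unfolding star_def by auto
  qed
  have "finite ?C \<and> card ?C = m \<and> (\<forall>K\<in>?C. is_clique (Jp_vertices m) Jp_adj K) \<and>
        (\<forall>e\<in>edges (Jp_vertices m) Jp_adj. \<exists>K\<in>?C. e \<subseteq> K)"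
  proof (intro conjI)
    show "card ?C = m" using card_image[OF inj] by simp
    show "\<forall>K\<in>?C. is_clique (Jp_vertices m) Jp_adj K"
      unfolding is_clique_def star_def Jp_adj_def by auto
    show "\<forall>e\<in>edges (Jp_vertices m) Jp_adj. \<exists>K\<in>?C. e \<subseteq> K"
    proof
      fix e assume "e \<in> edges (Jp_vertices m) Jp_adj"
      then obtain u v where e: "e = {u,v}" "u \<in> Jp_vertices m" "v \<in> Jp_vertices m" "Jp_adj u v"
        unfolding edges_def by auto
      then obtain i where "i \<in> u" "i \<in> v" unfolding Jp_adj_def by auto
      moreover have "i \<in> {1..m}" using e(2) \<open>i \<in> u\<close> unfolding Jp_vertices_def by auto
      ultimately show "\<exists>K\<in>?C. e \<subseteq> K" using e unfolding star_def by auto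
    qed
  qed (rule finite_imageI, simp)
  then show "\<exists>C. finite C \<and> card C = m \<and> (\<forall>K\<in>C. is_clique (Jp_vertices m) Jp_adj K) \<and>
        (\<forall>e\<in>edges (Jp_vertices m) Jp_adj. \<exists>K\<in>C. e \<subseteq> K)" by blast
next
  fix k assume "\<exists>C. finite C \<and> card C = k \<and> (\<forall>K\<in>C. is_clique (Jp_vertices m) Jp_adj K) \<and>
        (\<forall>e\<in>edges (Jp_vertices m) Jp_adj. \<exists>K\<in>C. e \<subseteq> K)"
  then obtain C where C: "finite C" "card C = k" "\<forall>K\<in>C. is_clique (Jp_vertices m) Jp_adj K"
    "\<forall>e\<in>edges (Jp_vertices m) Jp_adj. \<exists>K\<in>C. e \<subseteq> K" by blast
  have ex: "\<exists>K\<in>C. {i} \<in> K" if i: "i \<in> {1..m}" for i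
  proof -
    obtain j where j: "j \<in> {1..m}" "j \<noteq> i"
    proof (cases "i = 1")
      case True
      then show ?thesis using that[of 2] assms by auto
    next
      case False
      then show ?thesis using that[of 1] i by auto
    qed
    have "{{i}, {i,j}} \<in> edges (Jp_vertices m) Jp_adj"
      unfolding edges_def
      apply (rule CollectI, rule exI[of _ "{i}"], rule exI[of _ "{i,j}"])
      using i j unfolding Jp_vertices_def Jp_adj_def by auto
    then show ?thesis using C(4) by blast
  qed
  define f where "f i = (SOME K. K \<in> C \<and> {i} \<in> K)" for i
  have fC: "f i \<in> C \<and> {i} \<in> f i" if "i \<in> {1..m}" for i
    unfolding f_def by (rule someI_ex) (use ex[OF that] in blast)
  have "inj_on f {1..m}"
  proof (rule inj_onI)
    fix i j assume ij: "i \<in> {1..m}" "j \<in> {1..m}" "f i = f j"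
    show "i = j"
    proof (rule ccontr)
      assume "i \<noteq> j"
      have "is_clique (Jp_vertices m) Jp_adj (f i)" using C(3) fC[OF ij(1)] by blast
      moreover have "{i} \<in> f i" "{j} \<in> f i" using fC ij by auto
      ultimately have "Jp_adj {i} {j}" using \<open>i \<noteq> j\<close> unfolding is_clique_def by auto
      then show False using \<open>i \<noteq> j\<close> unfolding Jp_adj_def by auto
    qed
  qed
  moreover have "f ` {1..m} \<subseteq> C" using fC by auto
  ultimately have "card {1..m} \<le> card C" using card_inj_on_le C(1) by blast
  then show "m \<le> k" using C(2) by simp
qed

theorem mainTheorem14:
  fixes m :: nat
  assumes "m > 3"
  shows "card (Jp_vertices m) = (m choose 2) + m \<and>
         clique_cover_number (Jp_vertices m) Jp_adj = m \<and>
         Zplus (Jp_vertices m) Jp_adj = m choose 2 \<and>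
         Zplus (Jp_vertices m) Jp_adj = card (Jp_vertices m) - clique_cover_number (Jp_vertices m) Jp_adj"
proof -
  have m2: "m \<ge> 2" using assms by simp
  show ?thesis using card_V[of m] cc_val[OF m2] Zplus_val[OF m2] by simp
qed

end
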